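(* Let $H$ be a complex Hilbert space and $\{\mathcal{U}(t)\}_{t\geq 0}$ a strongly continuous semigroup on $H$ with generator $\mathcal{L}$. Let $z\in D(\mathcal{L})\cap D(\mathcal{L}^\dagger)$ with $z\neq0$, $\mathcal{P}:=(\cdot,z)(z,z)^{-1}z$, $\mathcal{Q}:=1-\mathcal{P}$. Let $K:\mathbb{R}_+\to\mathbb{C}$ be the unique continuous solution of $$K(t)=(\mathcal{U}(t)\mathcal{QL}z,\mathcal{Q}\mathcal{L}^\dagger z)(z,z)^{-1}-\int_0^tK(t-s)\,(\mathcal{U}(s)z,\mathcal{Q}\mathcal{L}^\dagger z)(z,z)^{-1}\,ds,$$ let $\eta_t:=\mathcal{U}(t)\mathcal{QL}z-\int_0^tK(t-s)\,\mathcal{U}(s)z\,ds$, and let $\{\mathcal{G}(t)\}_{t\ge0}$ be the strongly continuous semigroup generated by $\overline{\mathcal{QL}}\mathcal{Q}$. Then for all $t\ge0$: $\eta_t=\mathcal{G}(t)\mathcal{QL}z$, and $\int_0^t\eta_s\,ds\in D(\overline{\mathcal{QL}}\mathcal{Q})$ with $\eta_t=\eta_0+\overline{\mathcal{QL}}\mathcal{Q}\int_0^t\eta_s\,ds$.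
   Context: The scalar product $(\cdot,\cdot)$ on $H$ is conjugate-linear in its second argument. The generator is $\mathcal{L}x:=\lim_{h\searrow 0}\frac1h[\mathcal{U}(h)x-x]$ on the set $D(\mathcal{L})$ where the limit exists; $\dagger$ denotes the adjoint, the overbar the closure; $D(\overline{\mathcal{QL}}\mathcal{Q})=\{x:\mathcal{Q}x\in D(\overline{\mathcal{QL}})\}$. Integrals are Bochner integrals. *)

theory Defs
  imports "HOL-Analysis.Analysis"
begin

text \<open>A complex Hilbert space: a Banach space (over the reals) carrying a complex
scalar multiplication compatible with the real one, and a complex inner product
which is linear in the first and conjugate-linear in the second argument and
induces the norm.\<close>

class chilbert = banach +
  fixes cscale :: "complex \<Rightarrow> 'a \<Rightarrow> 'a"
    and cinner :: "'a \<Rightarrow> 'a \<Rightarrow> complex"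
  assumes cscale_of_real: "cscale (complex_of_real r) x = r *\<^sub>R x"
    and cscale_add_right: "cscale a (x + y) = cscale a x + cscale a y"
    and cscale_add_left: "cscale (a + b) x = cscale a x + cscale b x"
    and cscale_cscale: "cscale a (cscale b x) = cscale (a * b) x"
    and cscale_one: "cscale 1 x = x"
    and cinner_add_left: "cinner (x + y) w = cinner x w + cinner y w"
    and cinner_cscale_left: "cinner (cscale a x) w = a * cinner x w"
    and cinner_commute: "cinner y x = cnj (cinner x y)"
    and cinner_self_norm: "cinner x x = complex_of_real ((norm x)\<^sup>2)"

definition bounded_clinear_op :: "('a::chilbert \<Rightarrow> 'a) \<Rightarrow> bool" where
  "bounded_clinear_op T \<longleftrightarrow>
     (\<forall>x y. T (x + y) = T x + T y) \<and> (\<forall>a x. T (cscale a x) = cscale a (T x)) \<and>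
     (\<exists>C. \<forall>x. norm (T x) \<le> C * norm x)"

definition c0_semigroup :: "(real \<Rightarrow> 'a::chilbert \<Rightarrow> 'a) \<Rightarrow> bool" where
  "c0_semigroup U \<longleftrightarrow>
     (\<forall>t\<ge>0. bounded_clinear_op (U t)) \<and> U 0 = id \<and>
     (\<forall>s\<ge>0. \<forall>t\<ge>0. U (s + t) = U s \<circ> U t) \<and>
     (\<forall>x. ((\<lambda>t. U t x) \<longlongrightarrow> x) (at_right 0))"

definition gen_dom :: "(real \<Rightarrow> 'a::chilbert \<Rightarrow> 'a) \<Rightarrow> 'a set" where
  "gen_dom U = {x. \<exists>y. ((\<lambda>h. (1 / h) *\<^sub>R (U h x - x)) \<longlongrightarrow> y) (at_right 0)}"

definition gen :: "(real \<Rightarrow> 'a::chilbert \<Rightarrow> 'a) \<Rightarrow> 'a \<Rightarrow> 'a" where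
  "gen U x = Lim (at_right 0) (\<lambda>h. (1 / h) *\<^sub>R (U h x - x))"

definition adj_dom :: "'a set \<Rightarrow> ('a::chilbert \<Rightarrow> 'a) \<Rightarrow> 'a set" where
  "adj_dom D T = {y. \<exists>w. \<forall>x\<in>D. cinner (T x) y = cinner x w}"

definition adj :: "'a set \<Rightarrow> ('a::chilbert \<Rightarrow> 'a) \<Rightarrow> 'a \<Rightarrow> 'a" where
  "adj D T y = (THE w. \<forall>x\<in>D. cinner (T x) y = cinner x w)"

definition cl_graph :: "'a set \<Rightarrow> ('a::chilbert \<Rightarrow> 'a) \<Rightarrow> ('a \<times> 'a) set" where
  "cl_graph D T = closure {(x, T x) | x. x \<in> D}"

definition cl_dom :: "'a set \<Rightarrow> ('a::chilbert \<Rightarrow> 'a) \<Rightarrow> 'a set" where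
  "cl_dom D T = {x. \<exists>y. (x, y) \<in> cl_graph D T}"

definition cl_op :: "'a set \<Rightarrow> ('a::chilbert \<Rightarrow> 'a) \<Rightarrow> 'a \<Rightarrow> 'a" where
  "cl_op D T x = (THE y. (x, y) \<in> cl_graph D T)"

definition projP :: "'a::chilbert \<Rightarrow> 'a \<Rightarrow> 'a" where
  "projP z x = cscale (cinner x z / cinner z z) z"

definition projQ :: "'a::chilbert \<Rightarrow> 'a \<Rightarrow> 'a" where
  "projQ z x = x - projP z x"

end

theory Submission
  imports Defs
begin




lemma cinner_zero_left[simp]: "cinner 0 y = 0"
  using cinner_add_left[of 0 0 y] by simp

lemma cnj_cinner: "cnj (cinner x y) = cinner y x"
  by (simp add: cinner_commute[of y x])

lemma cinner_add_right: "cinner x (y + w) = cinner x y + cinner x w"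
  using cinner_commute[of x "y+w"] by (simp add: cinner_add_left cnj_cinner)

lemma cinner_zero_right[simp]: "cinner x 0 = 0"
  using cinner_commute[of x 0] by simp

lemma cinner_cscale_right': "cinner x (cscale a y) = cnj a * cinner x y"
  using cinner_commute[of x "cscale a y"] by (simp add: cinner_cscale_left cnj_cinner)

lemma cinner_minus_left: "cinner (- x) y = - cinner x y"
  using cinner_add_left[of x "-x" y] by (simp add: add_eq_0_iff)

lemma cinner_diff_left: "cinner (x - y) w = cinner x w - cinner y w"
  using cinner_add_left[of x "-y" w] cinner_minus_left by simp

lemma cinner_minus_right: "cinner x (- y) = - cinner x y"
  using cinner_commute[of x "- y"] by (simp add: cinner_minus_left cnj_cinner)

lemma cinner_diff_right: "cinner x (y - w) = cinner x y - cinner x w"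
  using cinner_add_right[of x y "-w"] cinner_minus_right by simp

lemma cinner_scaleR_left: "cinner (r *\<^sub>R x) y = complex_of_real r * cinner x y"
  using cinner_cscale_left[of "complex_of_real r" x y] by (simp add: cscale_of_real)

lemma cinner_scaleR_right: "cinner x (r *\<^sub>R y) = complex_of_real r * cinner x y"
  using cinner_cscale_right'[of x "complex_of_real r" y] by (simp add: cscale_of_real)

lemma cinner_self: "cinner x x = complex_of_real ((norm x)^2)"
  by (rule cinner_self_norm)

lemma cscale_zero_right[simp]: "cscale a 0 = 0"
  using cscale_add_right[of a 0 0] by simp

lemma cscale_zero_left[simp]: "cscale 0 x = 0"
  using cscale_of_real[of 0 x] by simp

lemma cscale_minus_right: "cscale a (- x) = - cscale a x"
  using cscale_add_right[of a x "-x"] by (simp add: add_eq_0_iff)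

lemma cscale_diff_right: "cscale a (x - y) = cscale a x - cscale a y"
  using cscale_add_right[of a x "-y"] cscale_minus_right by simp

lemma cscale_minus_left: "cscale (- a) x = - cscale a x"
  using cscale_add_left[of a "-a" x] by (simp add: add_eq_0_iff)

lemma cscale_diff_left: "cscale (a - b) x = cscale a x - cscale b x"
  using cscale_add_left[of a "-b" x] cscale_minus_left by simp

lemma cscale_scaleR_right: "cscale a (r *\<^sub>R x) = r *\<^sub>R cscale a x"
proof -
  have "cscale a (r *\<^sub>R x) = cscale a (cscale (complex_of_real r) x)" by (simp add: cscale_of_real)
  also have "\<dots> = cscale (complex_of_real r) (cscale a x)" by (simp add: cscale_cscale mult.commute)
  finally show ?thesis by (simp add: cscale_of_real)
qed

lemma cscale_scaleR_left: "cscale (r *\<^sub>R a) x = r *\<^sub>R cscale a x"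
proof -
  have "cscale (r *\<^sub>R a) x = cscale (complex_of_real r) (cscale a x)" by (simp add: cscale_cscale scaleR_conv_of_real)
  then show ?thesis by (simp add: cscale_of_real)
qed

lemma cinner_self_eq_0: "cinner x x = 0 \<longleftrightarrow> x = 0"
  by (simp add: cinner_self)

lemma cinner_self_real: "Re (cinner x x) = (norm x)^2" "Im (cinner x x) = 0"
  by (simp_all add: cinner_self)

lemma norm_cscale: "norm (cscale a x) = cmod a * norm x"
proof -
  have "complex_of_real ((norm (cscale a x))^2) = cinner (cscale a x) (cscale a x)"
    by (simp add: cinner_self)
  also have "\<dots> = a * cnj a * cinner x x"
    by (simp add: cinner_cscale_left cinner_cscale_right')
  also have "\<dots> = complex_of_real ((cmod a * norm x)^2)"
    by (simp add: cinner_self complex_norm_square[symmetric] power_mult_distrib)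
  finally have "(norm (cscale a x))^2 = (cmod a * norm x)^2"
    using of_real_eq_iff by blast
  then show ?thesis
    by (simp add: power2_eq_iff_nonneg)
qed

lemma cauchy_schwarz: "cmod (cinner x y) \<le> norm x * norm y"
proof (cases "y = 0")
  case True then show ?thesis by simp
next
  case False
  define N where "N = (norm y)^2"
  define a where "a = cinner x y"
  have N: "N > 0" using False by (simp add: N_def)
  have NC: "complex_of_real N \<noteq> 0" using N by simp
  have yy: "cinner y y = complex_of_real N" by (simp add: cinner_self N_def)
  define l where "l = a / complex_of_real N"
  have cl: "cnj l = cnj a / complex_of_real N" by (simp add: l_def)
  have yx: "cinner y x = cnj a" by (simp add: a_def cinner_commute[of y x])
  have c1: "cnj l * a = a * cnj a / complex_of_real N" by (simp add: cl)
  have c2: "l * cnj a = a * cnj a / complex_of_real N" by (simp add: l_def)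
  have c3: "l * cnj l * complex_of_real N = a * cnj a / complex_of_real N"
    using NC by (simp add: l_def cl)
  have "cinner (x - cscale l y) (x - cscale l y)
      = cinner x x - cnj l * cinner x y - l * cinner y x + l * cnj l * cinner y y"
    by (simp add: cinner_diff_left cinner_diff_right cinner_cscale_left cinner_cscale_right' algebra_simps)
  also have "\<dots> = cinner x x - a * cnj a / complex_of_real N"
    unfolding yx yy a_def[symmetric] c1 c2 c3 by simp
  also have "\<dots> = complex_of_real ((norm x)^2 - (cmod a)^2 / N)"
    by (simp add: cinner_self complex_norm_square[symmetric])
  finally have e: "cinner (x - cscale l y) (x - cscale l y) = complex_of_real ((norm x)^2 - (cmod a)^2 / N)" .
  have "0 \<le> (norm x)^2 - (cmod a)^2 / N"
  proof -
    have "complex_of_real ((norm (x - cscale l y))^2) = complex_of_real ((norm x)^2 - (cmod a)^2 / N)"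
      using e cinner_self[of "x - cscale l y"] by simp
    then have "(norm (x - cscale l y))^2 = (norm x)^2 - (cmod a)^2 / N"
      by (simp only: of_real_eq_iff)
    then show ?thesis by (metis zero_le_power2)
  qed
  then have "(cmod a)^2 / N \<le> (norm x)^2" by simp
  then have "(cmod a)^2 \<le> (norm x)^2 * N"
    using N by (simp add: pos_divide_le_eq)
  then have "(cmod a)^2 \<le> (norm x * norm y)^2"
    by (simp add: power_mult_distrib N_def)
  then show ?thesis unfolding a_def
    by (rule power2_le_imp_le) simp
qed

lemma bounded_bilinear_cinner: "bounded_bilinear cinner"
proof
  show "cinner (a + a') b = cinner a b + cinner a' b" for a a' b by (rule cinner_add_left)
  show "cinner a (b + b') = cinner a b + cinner a b'" for a b b' by (rule cinner_add_right)
  show "cinner (r *\<^sub>R a) b = r *\<^sub>R cinner a b" for r a b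
    by (simp add: cinner_scaleR_left scaleR_conv_of_real)
  show "cinner a (r *\<^sub>R b) = r *\<^sub>R cinner a b" for r a b
    by (simp add: cinner_scaleR_right scaleR_conv_of_real)
  show "\<exists>K. \<forall>a b. norm (cinner a b) \<le> norm a * norm b * K"
    using cauchy_schwarz by (intro exI[of _ 1]) auto
qed

lemma bounded_bilinear_cscale: "bounded_bilinear cscale"
proof
  show "cscale (a + a') b = cscale a b + cscale a' b" for a a' b by (rule cscale_add_left)
  show "cscale a (b + b') = cscale a b + cscale a b'" for a b b' by (rule cscale_add_right)
  show "cscale (r *\<^sub>R a) b = r *\<^sub>R cscale a b" for r a b by (rule cscale_scaleR_left)
  show "cscale a (r *\<^sub>R b) = r *\<^sub>R cscale a b" for r a b by (rule cscale_scaleR_right)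
  show "\<exists>K. \<forall>a b. norm (cscale a b) \<le> norm a * norm b * K"
    by (intro exI[of _ 1]) (simp add: norm_cscale)
qed

lemma cinner_ext: "(\<And>w. cinner x w = cinner y w) \<Longrightarrow> x = y"
  using cinner_self_eq_0[of "x - y"] by (simp add: cinner_diff_left)


lemma tendsto_right0_eps:
  fixes f :: "real \<Rightarrow> 'b::metric_space"
  assumes "\<And>e. e > 0 \<Longrightarrow> \<exists>d>0. \<forall>h. 0 < h \<and> h < d \<longrightarrow> dist (f h) l < e"
  shows "(f \<longlongrightarrow> l) (at_right 0)"
  unfolding tendsto_iff eventually_at_right_field
proof (intro allI impI)
  fix e :: real assume "e > 0"
  then obtain d where "d > 0" "\<forall>h. 0 < h \<and> h < d \<longrightarrow> dist (f h) l < e" using assms by blast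
  then show "\<exists>b>0. \<forall>y>0. y < b \<longrightarrow> dist (f y) l < e" by blast
qed

lemma right0_eps:
  fixes f :: "real \<Rightarrow> 'b::metric_space"
  assumes "(f \<longlongrightarrow> l) (at_right 0)" "e > 0"
  shows "\<exists>d>0. \<forall>h. 0 < h \<and> h < d \<longrightarrow> dist (f h) l < e"
  using assms unfolding tendsto_iff eventually_at_right_field by blast

lemma vd_eps:
  fixes f :: "real \<Rightarrow> 'b::real_normed_vector"
  assumes "\<And>e. e > 0 \<Longrightarrow> \<exists>d>0. \<forall>y\<in>S. y \<noteq> x \<and> \<bar>y - x\<bar> < d \<longrightarrow>
              norm (f y - f x - (y - x) *\<^sub>R v) \<le> e * \<bar>y - x\<bar>"
  shows "(f has_vector_derivative v) (at x within S)"
proof -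
  have "((\<lambda>y. (1 / norm (y - x)) *\<^sub>R (f y - (f x + (y - x) *\<^sub>R v))) \<longlongrightarrow> 0) (at x within S)"
    unfolding tendsto_iff eventually_at
  proof (intro allI impI)
    fix e :: real assume "e > 0"
    then obtain d where d: "d > 0" "\<forall>y\<in>S. y \<noteq> x \<and> \<bar>y - x\<bar> < d \<longrightarrow>
              norm (f y - f x - (y - x) *\<^sub>R v) \<le> (e/2) * \<bar>y - x\<bar>"
      using assms[of "e/2"] by auto
    show "\<exists>d>0. \<forall>y\<in>S. y \<noteq> x \<and> dist y x < d \<longrightarrow>
            dist ((1 / norm (y - x)) *\<^sub>R (f y - (f x + (y - x) *\<^sub>R v))) 0 < e"
    proof (intro exI[of _ d] conjI ballI impI)
      fix y assume y: "y \<in> S" "y \<noteq> x \<and> dist y x < d"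
      then have pos: "\<bar>y - x\<bar> > 0" by simp
      have "dist ((1 / norm (y - x)) *\<^sub>R (f y - (f x + (y - x) *\<^sub>R v))) 0
          = norm (f y - f x - (y - x) *\<^sub>R v) / \<bar>y - x\<bar>"
        by (simp add: diff_diff_add)
      also have "\<dots> \<le> (e/2) * \<bar>y - x\<bar> / \<bar>y - x\<bar>"
        using d(2) y pos by (intro divide_right_mono) (auto simp: dist_real_def)
      also have "\<dots> < e" using pos \<open>e > 0\<close> by simp
      finally show "dist ((1 / norm (y - x)) *\<^sub>R (f y - (f x + (y - x) *\<^sub>R v))) 0 < e" .
    qed (rule d(1))
  qed
  then show ?thesis
    unfolding has_vector_derivative_def has_derivative_within
    by (simp add: bounded_linear_scaleR_left)
qed

lemma ubp:
  fixes T :: "nat \<Rightarrow> 'a::banach \<Rightarrow> 'b::real_normed_vector"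
  assumes lin: "\<And>n. bounded_linear (T n)"
    and pw: "\<And>x. \<exists>B. \<forall>n. norm (T n x) \<le> B"
  shows "\<exists>M. \<forall>n x. norm (T n x) \<le> M * norm x"
proof -
  define F where "F k = {x. \<forall>n. norm (T n x) \<le> real k}" for k :: nat
  have clF: "closed (F k)" for k
  proof -
    have "F k = (\<Inter>n. {x. norm (T n x) \<le> real k})" by (auto simp: F_def)
    moreover have "closed {x. norm (T n x) \<le> real k}" for n
      by (intro closed_Collect_le continuous_intros linear_continuous_on lin)
    ultimately show ?thesis by auto
  qed
  have UF0: "\<exists>k. x \<in> F k" for x
  proof -
    obtain B where B: "\<forall>n. norm (T n x) \<le> B" using pw by blast
    obtain k :: nat where "B \<le> real k" using real_nat_ceiling_ge by blast
    then have "x \<in> F k" using B by (auto simp: F_def intro: order_trans)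
    then show ?thesis by blast
  qed
  have UF: "(\<Union>k. F k) = UNIV" using UF0 by blast
  have "\<exists>k. interior (F k) \<noteq> {}"
  proof (rule ccontr)
    assume "\<not> ?thesis"
    then have "\<forall>T\<in>range F. closedin euclidean T \<and> euclidean interior_of T = {}"
      using clF closed_closedin by auto
    then have "euclidean interior_of (\<Union>(range F)) = {}"
      by (intro Baire_category_alt) (auto simp: completely_metrizable_space_euclidean)
    then show False using UF by simp
  qed
  then obtain k x0 where "x0 \<in> interior (F k)" by blast
  then obtain r where r: "r > 0" "ball x0 r \<subseteq> F k" using mem_interior by blast
  show ?thesis
  proof (intro exI[of _ "4 * real k / r"] allI)
    fix n x
    show "norm (T n x) \<le> 4 * real k / r * norm x"
    proof (cases "x = 0")
      case True then show ?thesis using lin by (simp add: linear_simps)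
    next
      case False
      define c where "c = r / (2 * norm x)"
      have c: "c > 0" using False r by (simp add: c_def)
      have "x0 + c *\<^sub>R x \<in> ball x0 r"
        using False r by (simp add: c_def dist_norm)
      then have "x0 + c *\<^sub>R x \<in> F k" using r(2) by blast
      then have a: "norm (T n (x0 + c *\<^sub>R x)) \<le> real k" by (simp add: F_def)
      have "x0 \<in> ball x0 r" using r by simp
      then have "x0 \<in> F k" using r(2) by blast
      then have b: "norm (T n x0) \<le> real k" by (simp add: F_def)
      have "c * norm (T n x) = norm (T n (x0 + c *\<^sub>R x) - T n x0)"
        using c lin[of n] by (simp add: linear_simps)
      also have "\<dots> \<le> 2 * real k" using a b norm_triangle_ineq4[of "T n (x0 + c *\<^sub>R x)" "T n x0"] by linarith
      finally have "c * norm (T n x) \<le> 2 * real k" .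
      then have "norm (T n x) \<le> 2 * real k / c" using c by (simp add: field_simps)
      also have "\<dots> = 4 * real k / r * norm x" using False r by (simp add: c_def field_simps)
      finally show ?thesis .
    qed
  qed
qed




locale c0sg =
  fixes S :: "real \<Rightarrow> 'a::chilbert \<Rightarrow> 'a"
  assumes sg: "c0_semigroup S"
begin

lemma blin: "t \<ge> 0 \<Longrightarrow> bounded_linear (S t)"
proof -
  assume t: "t \<ge> 0"
  have "bounded_clinear_op (S t)" using sg t by (simp add: c0_semigroup_def)
  then obtain C where add: "\<forall>x y. S t (x + y) = S t x + S t y"
    and cs: "\<forall>a x. S t (cscale a x) = cscale a (S t x)" and C: "\<forall>x. norm (S t x) \<le> C * norm x"
    unfolding bounded_clinear_op_def by blast
  show ?thesis
  proof (rule bounded_linear_intro[where K=C])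
    show "S t (x + y) = S t x + S t y" for x y using add by blast
    show "S t (r *\<^sub>R x) = r *\<^sub>R S t x" for r x
      using cs[rule_format, of "complex_of_real r" x] by (simp add: cscale_of_real)
    show "norm (S t x) \<le> norm x * C" for x using C by (simp add: mult.commute)
  qed
qed

lemma Scs: "t \<ge> 0 \<Longrightarrow> S t (cscale a x) = cscale a (S t x)"
  using sg by (simp add: c0_semigroup_def bounded_clinear_op_def)

lemma S0[simp]: "S 0 x = x"
  using sg by (simp add: c0_semigroup_def)

lemma Sadd: "s \<ge> 0 \<Longrightarrow> t \<ge> 0 \<Longrightarrow> S (s + t) x = S s (S t x)"
  using sg by (simp add: c0_semigroup_def)

lemma Sdiff: "t \<ge> 0 \<Longrightarrow> S t (x - y) = S t x - S t y"
  using blin[of t] by (simp add: linear_simps)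

lemma Splus: "t \<ge> 0 \<Longrightarrow> S t (x + y) = S t x + S t y"
  using blin[of t] by (simp add: linear_simps)

lemma SscaleR: "t \<ge> 0 \<Longrightarrow> S t (r *\<^sub>R x) = r *\<^sub>R S t x"
  using blin[of t] by (simp add: linear_simps)

lemma Szero: "t \<ge> 0 \<Longrightarrow> S t 0 = 0"
  using blin[of t] by (simp add: linear_simps)

lemma Sminus: "t \<ge> 0 \<Longrightarrow> S t (- x) = - S t x"
  using blin[of t] by (simp add: linear_simps)

lemma lim0: "((\<lambda>t. S t x) \<longlongrightarrow> x) (at_right 0)"
  using sg by (simp add: c0_semigroup_def)

lemma eps0: "e > 0 \<Longrightarrow> \<exists>d>0. \<forall>h. 0 < h \<and> h < d \<longrightarrow> norm (S h x - x) < e"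
  using right0_eps[OF lim0] by (simp add: dist_norm)

lemma bound_small: "\<exists>d>0. \<exists>M\<ge>1. \<forall>t. 0 \<le> t \<and> t \<le> d \<longrightarrow> (\<forall>x. norm (S t x) \<le> M * norm x)"
proof (rule ccontr)
  assume neg: "\<not> ?thesis"
  have "\<forall>n::nat. \<exists>t. 0 \<le> t \<and> t \<le> 1 / real (Suc n) \<and> (\<exists>x. norm (S t x) > real (Suc n) * norm x)"
  proof
    fix n :: nat
    show "\<exists>t. 0 \<le> t \<and> t \<le> 1 / real (Suc n) \<and> (\<exists>x. norm (S t x) > real (Suc n) * norm x)"
    proof (rule ccontr)
      assume "\<not> ?thesis"
      then have "\<forall>t. 0 \<le> t \<and> t \<le> 1 / real (Suc n) \<longrightarrow> (\<forall>x. norm (S t x) \<le> real (Suc n) * norm x)"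
        by (auto simp: not_less)
      moreover have "(1::real) / real (Suc n) > 0" "real (Suc n) \<ge> 1" by auto
      ultimately show False using neg by blast
    qed
  qed
  then obtain t where t: "\<And>n. 0 \<le> t n" "\<And>n. t n \<le> 1 / real (Suc n)"
    "\<And>n. \<exists>x. norm (S (t n) x) > real (Suc n) * norm x"
    by metis
  have conv: "(\<lambda>n. S (t n) x) \<longlonglongrightarrow> x" for x
  proof (rule LIMSEQ_I)
    fix r :: real assume "r > 0"
    then obtain d where d: "d > 0" "\<forall>h. 0 < h \<and> h < d \<longrightarrow> norm (S h x - x) < r"
      using eps0 by blast
    obtain N where N: "N > 0" "inverse (real N) < d" using ex_inverse_of_nat_less[OF d(1)] by blast
    show "\<exists>no. \<forall>n\<ge>no. norm (S (t n) x - x) < r"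
    proof (intro exI allI impI)
      fix n assume "n \<ge> N"
      have "t n \<le> 1 / real (Suc n)" by (rule t(2))
      also have "\<dots> \<le> inverse (real N)" using \<open>n \<ge> N\<close> N(1) by (simp add: divide_simps)
      finally have "t n < d" using N by linarith
      show "norm (S (t n) x - x) < r"
      proof (cases "t n = 0")
        case True then show ?thesis using \<open>r > 0\<close> by simp
      next
        case False then show ?thesis using t(1)[of n] \<open>t n < d\<close> d(2) by simp
      qed
    qed
  qed
  have "\<exists>B. \<forall>n. norm (S (t n) x) \<le> B" for x
  proof -
    have "Bseq (\<lambda>n. S (t n) x)" using conv[of x] convergent_imp_Bseq convergent_def by blast
    then show ?thesis unfolding Bseq_def by blast
  qed
  then obtain M where M: "\<forall>n x. norm (S (t n) x) \<le> M * norm x"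
    using ubp[of "\<lambda>n. S (t n)"] blin t(1) by blast
  obtain k :: nat where k: "M \<le> real k" using real_nat_ceiling_ge by blast
  obtain x where x: "norm (S (t k) x) > real (Suc k) * norm x" using t(3) by blast
  have "norm (S (t k) x) \<le> M * norm x" using M by blast
  also have "\<dots> \<le> real (Suc k) * norm x" using k by (intro mult_right_mono) auto
  finally show False using x by simp
qed

lemma bound: "\<exists>M\<ge>1. \<forall>t. 0 \<le> t \<and> t \<le> T \<longrightarrow> (\<forall>x. norm (S t x) \<le> M * norm x)"
proof -
  obtain d M where d: "d > 0" "M \<ge> 1" "\<forall>t. 0 \<le> t \<and> t \<le> d \<longrightarrow> (\<forall>x. norm (S t x) \<le> M * norm x)"
    using bound_small by blast
  have P: "\<forall>t. 0 \<le> t \<and> t \<le> real n * d \<longrightarrow> (\<forall>x. norm (S t x) \<le> M ^ Suc n * norm x)" for n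
  proof (induction n)
    case 0
    show ?case using d by (auto simp: mult_le_cancel_right1)
  next
    case (Suc n)
    show ?case
    proof (intro allI impI)
      fix t x assume t: "0 \<le> t \<and> t \<le> real (Suc n) * d"
      show "norm (S t x) \<le> M ^ Suc (Suc n) * norm x"
      proof (cases "t \<le> d")
        case True
        then have "norm (S t x) \<le> M * norm x" using d t by blast
        also have "\<dots> \<le> M ^ Suc (Suc n) * norm x"
        proof -
          have "M \<le> M ^ Suc (Suc n)" using d(2) power_increasing[of 1 "Suc (Suc n)" M] by simp
          then show ?thesis by (intro mult_right_mono) auto
        qed
        finally show ?thesis .
      next
        case False
        then have t': "0 \<le> t - d \<and> t - d \<le> real n * d" using t by (auto simp: algebra_simps)
        have "S t x = S d (S (t - d) x)" using Sadd[of d "t - d" x] False d by simp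
        then have "norm (S t x) \<le> M * norm (S (t - d) x)" using d by simp
        also have "\<dots> \<le> M * (M ^ Suc n * norm x)"
          using Suc.IH t' d(2) by (intro mult_left_mono) auto
        finally show ?thesis by (simp add: mult.assoc)
      qed
    qed
  qed
  obtain n where n: "T < real n * d" using reals_Archimedean3[OF d(1)] by blast
  show ?thesis
    using P[of n] n d(2) one_le_power[of M "Suc n"] by (intro exI[of _ "M ^ Suc n"]) auto
qed

lemma cont_eps:
  assumes "t \<ge> 0" "e > 0"
  shows "\<exists>d>0. \<forall>s. s \<ge> 0 \<and> \<bar>s - t\<bar> < d \<longrightarrow> norm (S s x - S t x) < e"
proof -
  obtain M where M: "M \<ge> 1" "\<forall>r. 0 \<le> r \<and> r \<le> t + 1 \<longrightarrow> (\<forall>x. norm (S r x) \<le> M * norm x)"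
    using bound by blast
  have "e / M > 0" using M assms by simp
  then obtain d0 where d0: "d0 > 0" "\<forall>h. 0 < h \<and> h < d0 \<longrightarrow> norm (S h x - x) < e / M"
    using eps0 by blast
  show ?thesis
  proof (intro exI[of _ "min d0 1"] conjI allI impI)
    show "min d0 1 > 0" using d0 by simp
    fix s assume s: "s \<ge> 0 \<and> \<bar>s - t\<bar> < min d0 1"
    consider "s = t" | "s > t" | "s < t" by linarith
    then show "norm (S s x - S t x) < e"
    proof cases
      case 1 then show ?thesis using assms by simp
    next
      case 2
      define h where "h = s - t"
      have h: "0 < h" "h < d0" using 2 s by (auto simp: h_def)
      have "S s x = S t (S h x)" using Sadd[of t h x] h assms by (simp add: h_def)
      then have "S s x - S t x = S t (S h x - x)" using Sdiff assms by simp
      then have "norm (S s x - S t x) \<le> M * norm (S h x - x)" using M assms by simp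
      also have "\<dots> < M * (e / M)" using d0 h M by (intro mult_strict_left_mono) auto
      finally show ?thesis using M by simp
    next
      case 3
      define h where "h = t - s"
      have h: "0 < h" "h < d0" using 3 s by (auto simp: h_def)
      have "S t x = S s (S h x)" using Sadd[of s h x] h s by (simp add: h_def)
      then have "S s x - S t x = - S s (S h x - x)" using Sdiff s by simp
      then have "norm (S s x - S t x) \<le> M * norm (S h x - x)" using M s 3 by simp
      also have "\<dots> < M * (e / M)" using d0 h M by (intro mult_strict_left_mono) auto
      finally show ?thesis using M by simp
    qed
  qed
qed

lemma cont_on: "continuous_on {0..} (\<lambda>s. S s x)"
  unfolding continuous_on_iff
proof (intro ballI allI impI)
  fix t e :: real assume "t \<in> {0..}" "e > 0"
  then obtain d where "d > 0" "\<forall>s. s \<ge> 0 \<and> \<bar>s - t\<bar> < d \<longrightarrow> norm (S s x - S t x) < e"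
    using cont_eps by force
  then show "\<exists>d>0. \<forall>s\<in>{0..}. dist s t < d \<longrightarrow> dist (S s x) (S t x) < e"
    by (auto simp: dist_norm dist_real_def)
qed

lemma cont_on_sub: "a \<ge> 0 \<Longrightarrow> continuous_on {a..b} (\<lambda>s. S s x)"
  by (rule continuous_on_subset[OF cont_on]) auto

lemma integrable: "a \<ge> 0 \<Longrightarrow> (\<lambda>s. S s x) integrable_on {a..b}"
  by (rule integrable_continuous_real[OF cont_on_sub])

end




context c0sg begin

abbreviation "D \<equiv> gen_dom S"
abbreviation "L \<equiv> gen S"

definition quot :: "'a \<Rightarrow> real \<Rightarrow> 'a" where
  "quot x h = (1 / h) *\<^sub>R (S h x - x)"

lemma gen_lim: "x \<in> D \<Longrightarrow> (quot x \<longlongrightarrow> L x) (at_right 0)"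
proof -
  assume "x \<in> D"
  then obtain y where y: "((\<lambda>h. (1 / h) *\<^sub>R (S h x - x)) \<longlongrightarrow> y) (at_right 0)"
    by (auto simp: gen_dom_def)
  then have "L x = y" unfolding gen_def by (intro tendsto_Lim) auto
  then show ?thesis using y by (simp add: quot_def[abs_def])
qed

lemma gen_intro: "(quot x \<longlongrightarrow> y) (at_right 0) \<Longrightarrow> x \<in> D \<and> L x = y"
proof -
  assume y: "(quot x \<longlongrightarrow> y) (at_right 0)"
  then have y': "((\<lambda>h. (1 / h) *\<^sub>R (S h x - x)) \<longlongrightarrow> y) (at_right 0)"
    by (simp add: quot_def[abs_def])
  then have "x \<in> D" by (auto simp: gen_dom_def)
  moreover have "L x = y" unfolding gen_def using y' by (intro tendsto_Lim) auto
  ultimately show ?thesis by blast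
qed

lemma gen_intro_ev:
  assumes "eventually (\<lambda>h. quot x h = g h) (at_right 0)" "(g \<longlongrightarrow> y) (at_right 0)"
  shows "x \<in> D \<and> L x = y"
  using assms tendsto_cong gen_intro by metis

lemma ev_pos: "eventually (\<lambda>h::real. h > 0) (at_right 0)"
  by (simp add: eventually_at_right_field) (metis zero_less_one)

lemma gen_eps:
  assumes "x \<in> D" "e > 0"
  shows "\<exists>d>0. \<forall>h. 0 < h \<and> h < d \<longrightarrow> norm (S h x - x - h *\<^sub>R L x) \<le> e * h"
proof -
  obtain d where d: "d > 0" "\<forall>h. 0 < h \<and> h < d \<longrightarrow> dist (quot x h) (L x) < e"
    using right0_eps[OF gen_lim[OF assms(1)] assms(2)] by blast
  show ?thesis
  proof (intro exI[of _ d] conjI allI impI)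
    fix h assume h: "0 < h \<and> h < d"
    have "S h x - x - h *\<^sub>R L x = h *\<^sub>R (quot x h - L x)"
      using h by (simp add: quot_def scaleR_diff_right)
    then have "norm (S h x - x - h *\<^sub>R L x) = h * dist (quot x h) (L x)"
      using h by (simp add: dist_norm)
    also have "\<dots> \<le> h * e" using d h by (intro mult_left_mono) auto
    finally show "norm (S h x - x - h *\<^sub>R L x) \<le> e * h" by (simp add: mult.commute)
  qed (rule d(1))
qed

lemma gen_S:
  assumes "x \<in> D" "t \<ge> 0"
  shows "S t x \<in> D \<and> L (S t x) = S t (L x)"
proof (rule gen_intro_ev)
  show "eventually (\<lambda>h. quot (S t x) h = S t (quot x h)) (at_right 0)"
    using ev_pos
  proof (rule eventually_mono)
    fix h :: real assume h: "h > 0"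
    have "S h (S t x) = S t (S h x)"
      using Sadd[of h t x] Sadd[of t h x] h assms(2) by (simp add: add.commute)
    then show "quot (S t x) h = S t (quot x h)"
      using assms(2) by (simp add: quot_def SscaleR Sdiff)
  qed
  show "((\<lambda>h. S t (quot x h)) \<longlongrightarrow> S t (L x)) (at_right 0)"
    by (rule bounded_linear.tendsto[OF blin[OF assms(2)] gen_lim[OF assms(1)]])
qed

lemma deriv:
  assumes "x \<in> D" "t \<ge> 0"
  shows "((\<lambda>r. S r x) has_vector_derivative S t (L x)) (at t within {0..})"
proof (rule vd_eps)
  fix e :: real assume e: "e > 0"
  obtain M where M: "M \<ge> 1" "\<forall>r. 0 \<le> r \<and> r \<le> t + 1 \<longrightarrow> (\<forall>x. norm (S r x) \<le> M * norm x)"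
    using bound by blast
  have "e / (2 * M) > 0" using e M by simp
  then obtain d1 where d1: "d1 > 0" "\<forall>h. 0 < h \<and> h < d1 \<longrightarrow> norm (S h x - x - h *\<^sub>R L x) \<le> e / (2 * M) * h"
    using gen_eps[OF assms(1)] by blast
  obtain d2 where d2: "d2 > 0" "\<forall>s. s \<ge> 0 \<and> \<bar>s - t\<bar> < d2 \<longrightarrow> norm (S s (L x) - S t (L x)) < e / 2"
    using cont_eps[OF assms(2), of "e/2" "L x"] e by auto
  show "\<exists>d>0. \<forall>y\<in>{0..}. y \<noteq> t \<and> \<bar>y - t\<bar> < d \<longrightarrow>
          norm (S y x - S t x - (y - t) *\<^sub>R S t (L x)) \<le> e * \<bar>y - t\<bar>"
  proof (intro exI[of _ "min (min d1 d2) 1"] conjI ballI impI)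
    show "min (min d1 d2) 1 > 0" using d1 d2 by simp
    fix s assume s0: "s \<in> {0..}" and s: "s \<noteq> t \<and> \<bar>s - t\<bar> < min (min d1 d2) 1"
    have M2: "M * (e / (2 * M)) = e / 2" using M by simp
    consider "s > t" | "s < t" using s by linarith
    then show "norm (S s x - S t x - (s - t) *\<^sub>R S t (L x)) \<le> e * \<bar>s - t\<bar>"
    proof cases
      case 1
      define h where "h = s - t"
      have h: "0 < h" "h < d1" using 1 s by (auto simp: h_def)
      have "S s x = S t (S h x)" using Sadd[of t h x] h assms by (simp add: h_def)
      then have "S s x - S t x - (s - t) *\<^sub>R S t (L x) = S t (S h x - x - h *\<^sub>R L x)"
        using assms by (simp add: Sdiff SscaleR h_def)
      then have "norm (S s x - S t x - (s - t) *\<^sub>R S t (L x)) \<le> M * norm (S h x - x - h *\<^sub>R L x)"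
        using M assms by simp
      also have "\<dots> \<le> M * (e / (2 * M) * h)" using d1 h M by (intro mult_left_mono) auto
      also have "\<dots> = e / 2 * h" by (simp only: mult.assoc[symmetric] M2)
      also have "\<dots> \<le> e * \<bar>s - t\<bar>" using h e by (simp add: h_def)
      finally show ?thesis .
    next
      case 2
      define h where "h = t - s"
      have h: "0 < h" "h < d1" "h < d2" using 2 s by (auto simp: h_def)
      have s0': "s \<ge> 0" using s0 by simp
      have "S t x = S s (S h x)" using Sadd[of s h x] h s0' by (simp add: h_def)
      then have e1: "S s (S h x - x - h *\<^sub>R L x) = S t x - S s x - h *\<^sub>R S s (L x)"
        using s0' by (simp add: Sdiff SscaleR)
      have st: "s - t = - h" by (simp add: h_def)
      have eq: "S s x - S t x - (s - t) *\<^sub>R S t (L x)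
          = - S s (S h x - x - h *\<^sub>R L x) + h *\<^sub>R (S t (L x) - S s (L x))"
        unfolding e1 st by (simp add: algebra_simps)
      have "norm (S s (S h x - x - h *\<^sub>R L x)) \<le> M * norm (S h x - x - h *\<^sub>R L x)"
        using M s0' 2 by simp
      also have "\<dots> \<le> M * (e / (2 * M) * h)" using d1 h M by (intro mult_left_mono) auto
      also have "\<dots> = e / 2 * h" by (simp only: mult.assoc[symmetric] M2)
      finally have n1: "norm (S s (S h x - x - h *\<^sub>R L x)) \<le> e / 2 * h" .
      have "norm (S s (L x) - S t (L x)) < e / 2" using d2 s0' h by (auto simp: h_def)
      then have n2: "norm (h *\<^sub>R (S t (L x) - S s (L x))) \<le> e / 2 * h"
        using h by (simp add: norm_minus_commute)
      have "norm (S s x - S t x - (s - t) *\<^sub>R S t (L x))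
          \<le> norm (S s (S h x - x - h *\<^sub>R L x)) + norm (h *\<^sub>R (S t (L x) - S s (L x)))"
        unfolding eq by (metis norm_minus_cancel norm_triangle_ineq)
      also have "\<dots> \<le> e * h" using n1 n2 by simp
      finally show ?thesis using h by (simp add: h_def)
    qed
  qed
qed

lemma ftc:
  assumes "x \<in> D" "t \<ge> 0"
  shows "S t x - x = integral {0..t} (\<lambda>s. S s (L x))"
proof -
  have "((\<lambda>s. S s (L x)) has_integral (S t x - S 0 x)) {0..t}"
  proof (rule fundamental_theorem_of_calculus)
    show "0 \<le> t" by (rule assms(2))
    fix s assume "s \<in> {0..t}"
    then show "((\<lambda>r. S r x) has_vector_derivative S s (L x)) (at s within {0..t})"
      using deriv[OF assms(1), of s] by (auto intro: has_vector_derivative_within_subset)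
  qed
  then show ?thesis by (simp add: integral_unique)
qed

lemma avg:
  assumes "t \<ge> 0" "e > 0"
  shows "\<exists>d>0. \<forall>h. 0 < h \<and> h < d \<longrightarrow> norm (integral {t..t+h} (\<lambda>s. S s y) - h *\<^sub>R S t y) \<le> e * h"
proof -
  obtain d where d: "d > 0" "\<forall>s. s \<ge> 0 \<and> \<bar>s - t\<bar> < d \<longrightarrow> norm (S s y - S t y) < e"
    using cont_eps[OF assms] by blast
  show ?thesis
  proof (intro exI[of _ d] conjI allI impI)
    fix h assume h: "0 < h \<and> h < d"
    have "integral {t..t+h} (\<lambda>s. S s y - S t y) = integral {t..t+h} (\<lambda>s. S s y) - h *\<^sub>R S t y"
      using h assms by (subst integral_diff) (auto intro!: integrable assms simp: integrable_const_ivl)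
    moreover have "norm (integral {t..t+h} (\<lambda>s. S s y - S t y)) \<le> e * (t + h - t)"
    proof (rule integral_bound)
      show "t \<le> t + h" using h by simp
      show "continuous_on {t..t + h} (\<lambda>s. S s y - S t y)"
        using assms by (intro continuous_intros cont_on_sub)
      fix s assume "s \<in> {t..t+h}"
      then show "norm (S s y - S t y) \<le> e" using d h assms by (intro less_imp_le) auto
    qed
    ultimately show "norm (integral {t..t+h} (\<lambda>s. S s y) - h *\<^sub>R S t y) \<le> e * h" by simp
  qed (rule d(1))
qed

end




context c0sg begin

lemma avg_lim:
  assumes "t \<ge> 0"
  shows "((\<lambda>h. (1 / h) *\<^sub>R integral {t..t+h} (\<lambda>s. S s y)) \<longlongrightarrow> S t y) (at_right 0)"
proof (rule tendsto_right0_eps)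
  fix e :: real assume e: "e > 0"
  then obtain d where d: "d > 0" "\<forall>h. 0 < h \<and> h < d \<longrightarrow> norm (integral {t..t+h} (\<lambda>s. S s y) - h *\<^sub>R S t y) \<le> e / 2 * h"
    using avg[OF assms, of "e/2" y] by auto
  show "\<exists>d>0. \<forall>h. 0 < h \<and> h < d \<longrightarrow> dist ((1 / h) *\<^sub>R integral {t..t+h} (\<lambda>s. S s y)) (S t y) < e"
  proof (intro exI[of _ d] conjI allI impI)
    fix h assume h: "0 < h \<and> h < d"
    have "(1 / h) *\<^sub>R integral {t..t+h} (\<lambda>s. S s y) - S t y
        = (1 / h) *\<^sub>R (integral {t..t+h} (\<lambda>s. S s y) - h *\<^sub>R S t y)"
      using h by (simp add: scaleR_diff_right)
    then have "dist ((1 / h) *\<^sub>R integral {t..t+h} (\<lambda>s. S s y)) (S t y)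
        = norm (integral {t..t+h} (\<lambda>s. S s y) - h *\<^sub>R S t y) / h"
      using h by (simp add: dist_norm)
    also have "\<dots> \<le> (e / 2 * h) / h" using d h by (intro divide_right_mono) auto
    also have "\<dots> < e" using h e by simp
    finally show "dist ((1 / h) *\<^sub>R integral {t..t+h} (\<lambda>s. S s y)) (S t y) < e" .
  qed (rule d(1))
qed

lemma avg_lim0: "((\<lambda>h. (1 / h) *\<^sub>R integral {0..h} (\<lambda>s. S s y)) \<longlongrightarrow> y) (at_right 0)"
  using avg_lim[of 0 y] by simp

lemma int_dom:
  assumes t: "t \<ge> 0"
  shows "integral {0..t} (\<lambda>s. S s x) \<in> D \<and> L (integral {0..t} (\<lambda>s. S s x)) = S t x - x"
proof -
  define f where "f = (\<lambda>s. S s x)"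
  define I where "I = integral {0..t} f"
  have key: "quot I h = (1 / h) *\<^sub>R integral {t..t+h} f - (1 / h) *\<^sub>R integral {0..h} f" if h: "h > 0" for h
  proof -
    have "S h I = integral {0..t} (S h \<circ> f)"
      unfolding I_def f_def using integral_linear[OF integrable[of 0 x t] blin[of h]] h by simp
    also have "\<dots> = integral {0..t} (f \<circ> (+) h)"
      using h by (intro integral_cong) (simp add: f_def Sadd)
    also have "\<dots> = integral {h..t+h} f" using integral_shift_Icc_real[of 0 t f h] by (simp add: add.commute)
    finally have e1: "S h I = integral {h..t+h} f" .
    have c1: "integral {0..h} f + integral {h..t+h} f = integral {0..t+h} f"
      using h t unfolding f_def by (intro Henstock_Kurzweil_Integration.integral_combine integrable) auto
    have c2: "integral {0..t} f + integral {t..t+h} f = integral {0..t+h} f"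
      using h t unfolding f_def by (intro Henstock_Kurzweil_Integration.integral_combine integrable) auto
    have "S h I - I - (integral {t..t+h} f - integral {0..h} f)
        = (integral {0..h} f + integral {h..t+h} f) - (integral {0..t} f + integral {t..t+h} f)"
    proof -
      have gen: "\<And>E I A B :: 'a. E - I - (A - B) = (B + E) - (I + A)" by (simp add: algebra_simps)
      show ?thesis unfolding e1 unfolding I_def by (rule gen)
    qed
    also have "\<dots> = 0" using c1 c2 by simp
    finally have "S h I - I = integral {t..t+h} f - integral {0..h} f" by simp
    then show ?thesis by (simp add: quot_def scaleR_diff_right)
  qed
  have "I \<in> D \<and> L I = S t x - x"
  proof (rule gen_intro_ev)
    show "eventually (\<lambda>h. quot I h = (1 / h) *\<^sub>R integral {t..t+h} f - (1 / h) *\<^sub>R integral {0..h} f) (at_right 0)"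
      using ev_pos by (rule eventually_mono) (rule key)
    show "((\<lambda>h. (1 / h) *\<^sub>R integral {t..t+h} f - (1 / h) *\<^sub>R integral {0..h} f) \<longlongrightarrow> S t x - x) (at_right 0)"
      unfolding f_def by (intro tendsto_diff avg_lim avg_lim0 t)
  qed
  then show ?thesis by (simp add: I_def f_def)
qed

lemma dom_add:
  assumes "x \<in> D" "y \<in> D"
  shows "x + y \<in> D \<and> L (x + y) = L x + L y"
proof (rule gen_intro_ev)
  show "eventually (\<lambda>h. quot (x + y) h = quot x h + quot y h) (at_right 0)"
    using ev_pos by (rule eventually_mono) (simp add: quot_def Splus algebra_simps)
  show "((\<lambda>h. quot x h + quot y h) \<longlongrightarrow> L x + L y) (at_right 0)"
    by (intro tendsto_add gen_lim assms)
qed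

lemma dom_cscale:
  assumes "x \<in> D"
  shows "cscale a x \<in> D \<and> L (cscale a x) = cscale a (L x)"
proof (rule gen_intro_ev)
  show "eventually (\<lambda>h. quot (cscale a x) h = cscale a (quot x h)) (at_right 0)"
    using ev_pos by (rule eventually_mono) (simp add: quot_def Scs cscale_diff_right cscale_scaleR_right)
  show "((\<lambda>h. cscale a (quot x h)) \<longlongrightarrow> cscale a (L x)) (at_right 0)"
    by (intro bounded_bilinear.tendsto[OF bounded_bilinear_cscale] tendsto_const gen_lim assms)
qed

lemma cscale_m1: "cscale (-1) y = - y"
  by (simp add: cscale_minus_left cscale_one)

lemma dom_diff:
  assumes "x \<in> D" "y \<in> D"
  shows "x - y \<in> D \<and> L (x - y) = L x - L y"
  using dom_add[OF assms(1) conjunct1[OF dom_cscale[OF assms(2), of "-1"]]]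
    dom_cscale[OF assms(2), of "-1"] by (simp add: cscale_m1)

lemma dom_scaleR:
  assumes "x \<in> D"
  shows "r *\<^sub>R x \<in> D \<and> L (r *\<^sub>R x) = r *\<^sub>R L x"
  using dom_cscale[OF assms, of "complex_of_real r"] by (simp add: cscale_of_real)

lemma dense: "x \<in> closure D"
  unfolding closure_approachable
proof (intro allI impI)
  fix e :: real assume e: "e > 0"
  obtain d where d: "d > 0" "\<forall>h. 0 < h \<and> h < d \<longrightarrow> dist ((1 / h) *\<^sub>R integral {0..h} (\<lambda>s. S s x)) x < e"
    using right0_eps[OF avg_lim0 e] by blast
  define h where "h = d / 2"
  have h: "0 < h" "h < d" using d by (auto simp: h_def)
  have "(1 / h) *\<^sub>R integral {0..h} (\<lambda>s. S s x) \<in> D"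
    using dom_scaleR int_dom h by auto
  then show "\<exists>y\<in>D. dist y x < e" using d h by blast
qed

lemma closed_gen:
  assumes xs: "\<And>n. xs n \<in> D" and c1: "xs \<longlonglongrightarrow> x" and c2: "(\<lambda>n. L (xs n)) \<longlonglongrightarrow> y"
  shows "x \<in> D \<and> L x = y"
proof -
  have eq: "S t x - x = integral {0..t} (\<lambda>s. S s y)" if t: "t \<ge> 0" for t
  proof -
    obtain M where M: "M \<ge> 1" "\<forall>r. 0 \<le> r \<and> r \<le> t \<longrightarrow> (\<forall>z. norm (S r z) \<le> M * norm z)"
      using bound by blast
    have l1: "(\<lambda>n. S t (xs n) - xs n) \<longlonglongrightarrow> S t x - x"
      by (intro tendsto_diff bounded_linear.tendsto[OF blin[OF t]] c1)
    have "(\<lambda>n. integral {0..t} (\<lambda>s. S s (L (xs n))) - integral {0..t} (\<lambda>s. S s y)) \<longlonglongrightarrow> 0"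
    proof (rule Lim_null_comparison)
      show "eventually (\<lambda>n. norm (integral {0..t} (\<lambda>s. S s (L (xs n))) - integral {0..t} (\<lambda>s. S s y))
              \<le> M * norm (L (xs n) - y) * t) sequentially"
      proof (rule always_eventually, rule allI)
        fix n
        have "integral {0..t} (\<lambda>s. S s (L (xs n) - y)) = integral {0..t} (\<lambda>s. S s (L (xs n)) - S s y)"
          by (rule integral_cong) (simp add: Sdiff)
        also have "\<dots> = integral {0..t} (\<lambda>s. S s (L (xs n))) - integral {0..t} (\<lambda>s. S s y)"
          by (rule integral_diff) (auto intro: integrable)
        finally have eqi: "integral {0..t} (\<lambda>s. S s (L (xs n))) - integral {0..t} (\<lambda>s. S s y)
            = integral {0..t} (\<lambda>s. S s (L (xs n) - y))" by simp
        have "norm (integral {0..t} (\<lambda>s. S s (L (xs n) - y))) \<le> M * norm (L (xs n) - y) * (t - 0)"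
        proof (rule integral_bound)
          show "0 \<le> t" by (rule t)
          show "continuous_on {0..t} (\<lambda>s. S s (L (xs n) - y))" by (rule cont_on_sub) simp
          fix s assume "s \<in> {0..t}"
          then show "norm (S s (L (xs n) - y)) \<le> M * norm (L (xs n) - y)" using M by auto
        qed
        then show "norm (integral {0..t} (\<lambda>s. S s (L (xs n))) - integral {0..t} (\<lambda>s. S s y))
              \<le> M * norm (L (xs n) - y) * t" unfolding eqi by simp
      qed
      have "(\<lambda>n. norm (L (xs n) - y)) \<longlonglongrightarrow> 0"
        by (intro tendsto_norm_zero LIM_zero c2)
      then have "(\<lambda>n. M * norm (L (xs n) - y)) \<longlonglongrightarrow> 0" by (rule tendsto_mult_right_zero)
      then show "(\<lambda>n. M * norm (L (xs n) - y) * t) \<longlonglongrightarrow> 0" by (rule tendsto_mult_left_zero)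
    qed
    then have "(\<lambda>n. integral {0..t} (\<lambda>s. S s (L (xs n)))) \<longlonglongrightarrow> integral {0..t} (\<lambda>s. S s y)"
      by (rule LIM_zero_cancel)
    moreover have "S t (xs n) - xs n = integral {0..t} (\<lambda>s. S s (L (xs n)))" for n
      using ftc[OF xs t] .
    ultimately have l2: "(\<lambda>n. S t (xs n) - xs n) \<longlonglongrightarrow> integral {0..t} (\<lambda>s. S s y)" by simp
    show ?thesis using LIMSEQ_unique[OF l1 l2] .
  qed
  show ?thesis
  proof (rule gen_intro_ev)
    show "eventually (\<lambda>h. quot x h = (1 / h) *\<^sub>R integral {0..h} (\<lambda>s. S s y)) (at_right 0)"
      using ev_pos by (rule eventually_mono) (simp add: quot_def eq)
    show "((\<lambda>h. (1 / h) *\<^sub>R integral {0..h} (\<lambda>s. S s y)) \<longlongrightarrow> y) (at_right 0)"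
      by (rule avg_lim0)
  qed
qed

end




lemma vd_epsD:
  fixes f :: "real \<Rightarrow> 'b::real_normed_vector"
  assumes "(f has_vector_derivative v) (at x within S)" "e > 0"
  shows "\<exists>d>0. \<forall>y\<in>S. y \<noteq> x \<and> \<bar>y - x\<bar> < d \<longrightarrow> norm (f y - f x - (y - x) *\<^sub>R v) \<le> e * \<bar>y - x\<bar>"
proof -
  have "((\<lambda>y. (1 / norm (y - x)) *\<^sub>R (f y - (f x + (y - x) *\<^sub>R v))) \<longlongrightarrow> 0) (at x within S)"
    using assms(1) unfolding has_vector_derivative_def has_derivative_within by simp
  then obtain d where d: "d > 0" "\<forall>y\<in>S. y \<noteq> x \<and> dist y x < d \<longrightarrow>
      dist ((1 / norm (y - x)) *\<^sub>R (f y - (f x + (y - x) *\<^sub>R v))) 0 < e"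
    unfolding tendsto_iff eventually_at using assms(2) by blast
  show ?thesis
  proof (intro exI[of _ d] conjI ballI impI)
    fix y assume y: "y \<in> S" "y \<noteq> x \<and> \<bar>y - x\<bar> < d"
    then have pos: "\<bar>y - x\<bar> > 0" by simp
    have "norm (f y - f x - (y - x) *\<^sub>R v) / \<bar>y - x\<bar> < e"
      using d(2) y by (simp add: dist_real_def diff_diff_add)
    then show "norm (f y - f x - (y - x) *\<^sub>R v) \<le> e * \<bar>y - x\<bar>"
      using pos by (simp add: divide_less_eq less_imp_le)
  qed (rule d(1))
qed

lemma op_prod_deriv:
  fixes F :: "real \<Rightarrow> 'a::real_normed_vector \<Rightarrow> 'b::real_normed_vector" and g :: "real \<Rightarrow> 'a"
  assumes lin: "\<And>r. r \<in> T \<Longrightarrow> bounded_linear (F r)"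
    and M: "M \<ge> 0" and bnd: "\<And>r y. r \<in> T \<Longrightarrow> norm (F r y) \<le> M * norm y"
    and cont: "\<And>e. e > 0 \<Longrightarrow> \<exists>d>0. \<forall>r\<in>T. \<bar>r - s\<bar> < d \<longrightarrow> norm (F r g' - F s g') < e"
    and dF: "((\<lambda>r. F r (g s)) has_vector_derivative dd) (at s within T)"
    and dg: "(g has_vector_derivative g') (at s within T)"
    and s: "s \<in> T"
  shows "((\<lambda>r. F r (g r)) has_vector_derivative (F s g' + dd)) (at s within T)"
proof (rule vd_eps)
  fix e :: real assume e: "e > 0"
  have e1: "e / (3 * (M + 1)) > 0" using e M by simp
  obtain d1 where d1: "d1 > 0" "\<forall>r\<in>T. r \<noteq> s \<and> \<bar>r - s\<bar> < d1 \<longrightarrow> norm (g r - g s - (r - s) *\<^sub>R g') \<le> e / (3 * (M + 1)) * \<bar>r - s\<bar>"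
    using vd_epsD[OF dg e1] by blast
  obtain d2 where d2: "d2 > 0" "\<forall>r\<in>T. \<bar>r - s\<bar> < d2 \<longrightarrow> norm (F r g' - F s g') < e / 3"
    using cont[of "e/3"] e by auto
  obtain d3 where d3: "d3 > 0" "\<forall>r\<in>T. r \<noteq> s \<and> \<bar>r - s\<bar> < d3 \<longrightarrow> norm (F r (g s) - F s (g s) - (r - s) *\<^sub>R dd) \<le> e / 3 * \<bar>r - s\<bar>"
    using vd_epsD[OF dF, of "e/3"] e by auto
  show "\<exists>d>0. \<forall>r\<in>T. r \<noteq> s \<and> \<bar>r - s\<bar> < d \<longrightarrow>
          norm (F r (g r) - F s (g s) - (r - s) *\<^sub>R (F s g' + dd)) \<le> e * \<bar>r - s\<bar>"
  proof (intro exI[of _ "min d1 (min d2 d3)"] conjI ballI impI)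
    show "min d1 (min d2 d3) > 0" using d1 d2 d3 by simp
    fix r assume r: "r \<in> T" and rs: "r \<noteq> s \<and> \<bar>r - s\<bar> < min d1 (min d2 d3)"
    have eq: "F r (g r) - F s (g s) - (r - s) *\<^sub>R (F s g' + dd)
      = F r (g r - g s - (r - s) *\<^sub>R g') + (r - s) *\<^sub>R (F r g' - F s g')
        + (F r (g s) - F s (g s) - (r - s) *\<^sub>R dd)"
      using lin[OF r] by (simp add: linear_simps algebra_simps)
    have n1: "norm (F r (g r - g s - (r - s) *\<^sub>R g')) \<le> e / 3 * \<bar>r - s\<bar>"
    proof -
      have "norm (F r (g r - g s - (r - s) *\<^sub>R g')) \<le> M * norm (g r - g s - (r - s) *\<^sub>R g')"
        using bnd r by blast
      also have "\<dots> \<le> M * (e / (3 * (M + 1)) * \<bar>r - s\<bar>)"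
        using d1 r rs M by (intro mult_left_mono) auto
      also have "\<dots> = (M / (M + 1)) * (e / 3 * \<bar>r - s\<bar>)" using M by (simp add: field_simps)
      also have "\<dots> \<le> 1 * (e / 3 * \<bar>r - s\<bar>)" using M e by (intro mult_right_mono) auto
      finally show ?thesis by simp
    qed
    have n2: "norm ((r - s) *\<^sub>R (F r g' - F s g')) \<le> e / 3 * \<bar>r - s\<bar>"
      using d2 r rs by (simp add: mult.commute mult_left_mono less_imp_le)
    have n3: "norm (F r (g s) - F s (g s) - (r - s) *\<^sub>R dd) \<le> e / 3 * \<bar>r - s\<bar>"
      using d3 r rs by auto
    have "norm (F r (g r) - F s (g s) - (r - s) *\<^sub>R (F s g' + dd))
        \<le> norm (F r (g r - g s - (r - s) *\<^sub>R g')) + norm ((r - s) *\<^sub>R (F r g' - F s g'))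
          + norm (F r (g s) - F s (g s) - (r - s) *\<^sub>R dd)"
      unfolding eq by (meson add_mono_thms_linordered_semiring(1) norm_triangle_ineq order_trans order_refl)
    also have "\<dots> \<le> e * \<bar>r - s\<bar>" using n1 n2 n3 by simp
    finally show "norm (F r (g r) - F s (g s) - (r - s) *\<^sub>R (F s g' + dd)) \<le> e * \<bar>r - s\<bar>" .
  qed
qed

lemma integral_reflect_shift:
  fixes h :: "real \<Rightarrow> 'b::real_normed_vector"
  shows "integral {0..t} (\<lambda>s. h (t - s)) = integral {0..t} h"
proof -
  have "integral {-t..0} ((\<lambda>s. h (t - s)) \<circ> (+) t) = integral {-t+t..0+t} (\<lambda>s. h (t - s))"
    by (rule integral_shift_Icc_real)
  then have "integral {0..t} (\<lambda>s. h (t - s)) = integral {-t..0} (\<lambda>u. h (- u))"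
    by (simp add: o_def)
  also have "\<dots> = integral {0..t} h" using Henstock_Kurzweil_Integration.integral_reflect_real[of t 0 h] by simp
  finally show ?thesis .
qed

lemma integral_pow:
  assumes "t \<ge> 0"
  shows "integral {0..t} (\<lambda>s::real. s ^ n) = t ^ Suc n / real (Suc n)"
proof -
  have "((\<lambda>s::real. s ^ n) has_integral (t ^ Suc n / real (Suc n) - 0 ^ Suc n / real (Suc n))) {0..t}"
  proof (rule fundamental_theorem_of_calculus)
    show "0 \<le> t" by (rule assms)
    fix x :: real assume "x \<in> {0..t}"
    have "((\<lambda>s::real. s ^ Suc n) has_real_derivative real (Suc n) * x ^ n) (at x within {0..t})"
      using DERIV_pow[of "Suc n" x] by simp
    then have "((\<lambda>s::real. s ^ Suc n / real (Suc n)) has_real_derivative real (Suc n) * x ^ n / real (Suc n)) (at x within {0..t})"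
      by (rule DERIV_cdivide)
    then have "((\<lambda>s::real. s ^ Suc n / real (Suc n)) has_real_derivative x ^ n) (at x within {0..t})"
      by (simp del: of_nat_Suc)
    then show "((\<lambda>s::real. s ^ Suc n / real (Suc n)) has_vector_derivative x ^ n) (at x within {0..t})"
      by (simp add: has_real_derivative_iff_has_vector_derivative)
  qed
  then show ?thesis by (simp add: integral_unique)
qed

lemma volterra_unique:
  fixes d f :: "real \<Rightarrow> complex"
  assumes T: "T \<ge> 0" and contd: "continuous_on {0..T} d" and contf: "continuous_on {0..T} f"
    and eq: "\<And>t. t \<in> {0..T} \<Longrightarrow> d t = - integral {0..t} (\<lambda>s. d (t - s) * f s)"
  shows "\<And>t. t \<in> {0..T} \<Longrightarrow> d t = 0"
proof -
  obtain Bd where Bd: "Bd \<ge> 0" "\<And>t. t \<in> {0..T} \<Longrightarrow> cmod (d t) \<le> Bd"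
  proof -
    have "bounded (d ` {0..T})" by (intro compact_imp_bounded compact_continuous_image contd) auto
    then obtain B where "\<forall>x\<in>d ` {0..T}. norm x \<le> B" unfolding bounded_iff by blast
    then show ?thesis using that[of "max B 0"] by force
  qed
  obtain Bf where Bf: "Bf \<ge> 0" "\<And>t. t \<in> {0..T} \<Longrightarrow> cmod (f t) \<le> Bf"
  proof -
    have "bounded (f ` {0..T})" by (intro compact_imp_bounded compact_continuous_image contf) auto
    then obtain B where "\<forall>x\<in>f ` {0..T}. norm x \<le> B" unfolding bounded_iff by blast
    then show ?thesis using that[of "max B 0"] by force
  qed
  have ind: "\<forall>t\<in>{0..T}. cmod (d t) \<le> Bd * (Bf * t) ^ n / fact n" for n
  proof (induction n)
    case 0 then show ?case using Bd by simp
  next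
    case (Suc n)
    show ?case
    proof
      fix t assume t: "t \<in> {0..T}"
      have cint: "continuous_on {0..t} (\<lambda>s. d (t - s) * f s)"
      proof (intro continuous_intros)
        show "continuous_on {0..t} (\<lambda>s. d (t - s))"
          using t by (intro continuous_on_compose2[OF contd] continuous_intros) auto
        show "continuous_on {0..t} f" using t by (intro continuous_on_subset[OF contf]) auto
      qed
      have "cmod (d t) = cmod (integral {0..t} (\<lambda>s. d (t - s) * f s))" using eq[OF t] by simp
      also have "\<dots> \<le> integral {0..t} (\<lambda>s. Bd * (Bf * (t - s)) ^ n / fact n * Bf)"
      proof (rule integral_norm_bound_integral)
        show "(\<lambda>s. d (t - s) * f s) integrable_on {0..t}" by (rule integrable_continuous_real[OF cint])
        show "(\<lambda>s. Bd * (Bf * (t - s)) ^ n / fact n * Bf) integrable_on {0..t}"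
          by (intro integrable_continuous_real continuous_intros) auto
        fix s assume s: "s \<in> {0..t}"
        have "cmod (d (t - s) * f s) = cmod (d (t - s)) * cmod (f s)" by (simp add: norm_mult)
        also have "\<dots> \<le> (Bd * (Bf * (t - s)) ^ n / fact n) * Bf"
          using Suc.IH s t Bf(2)[of s] Bd(1) Bf(1) by (intro mult_mono) auto
        finally show "norm (d (t - s) * f s) \<le> Bd * (Bf * (t - s)) ^ n / fact n * Bf" by simp
      qed
      also have "\<dots> = integral {0..t} (\<lambda>s. Bd * (Bf * s) ^ n / fact n * Bf)"
        by (rule integral_reflect_shift)
      also have "\<dots> = (Bd * Bf ^ n / fact n * Bf) * integral {0..t} (\<lambda>s. s ^ n)"
        by (simp add: power_mult_distrib mult_ac)
      also have "\<dots> = (Bd * Bf ^ n / fact n * Bf) * (t ^ Suc n / real (Suc n))"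
        using t by (simp add: integral_pow)
      also have "\<dots> = Bd * (Bf * t) ^ Suc n / fact (Suc n)"
        by (simp add: power_mult_distrib field_simps del: of_nat_Suc)
      finally show "cmod (d t) \<le> Bd * (Bf * t) ^ Suc n / fact (Suc n)" .
    qed
  qed
  fix t assume t: "t \<in> {0..T}"
  have "(\<lambda>n. inverse (fact n) * (Bf * t) ^ n) \<longlonglongrightarrow> 0"
    by (rule summable_LIMSEQ_zero[OF summable_exp])
  then have "(\<lambda>n. Bd * (inverse (fact n) * (Bf * t) ^ n)) \<longlonglongrightarrow> 0"
    by (rule tendsto_mult_right_zero)
  moreover have "\<forall>n. cmod (d t) \<le> Bd * (inverse (fact n) * (Bf * t) ^ n)"
  proof
    fix n
    have "cmod (d t) \<le> Bd * (Bf * t) ^ n / fact n" using ind t by blast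
    then show "cmod (d t) \<le> Bd * (inverse (fact n) * (Bf * t) ^ n)" by (simp add: divide_inverse mult_ac)
  qed
  ultimately have "cmod (d t) \<le> 0" by (intro LIMSEQ_le_const) auto
  then show "d t = 0" by simp
qed




lemma bounded_linear_cinner_left: "bounded_linear (\<lambda>x. cinner x v)"
  by (rule bounded_bilinear.bounded_linear_left[OF bounded_bilinear_cinner])

lemma bounded_linear_cscale_right: "bounded_linear (\<lambda>x. cscale a x)"
  by (rule bounded_bilinear.bounded_linear_right[OF bounded_bilinear_cscale])

lemma bounded_linear_cscale_left: "bounded_linear (\<lambda>a. cscale a x)"
  by (rule bounded_bilinear.bounded_linear_left[OF bounded_bilinear_cscale])

locale mz = U: c0sg U + G: c0sg G for U G :: "real \<Rightarrow> 'a::chilbert \<Rightarrow> 'a" +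
  fixes z :: 'a
  assumes zL: "z \<in> gen_dom U"
    and zLd: "z \<in> adj_dom (gen_dom U) (gen U)"
    and z0: "z \<noteq> 0"
    and G_dom: "gen_dom G = {x. projQ z x \<in> cl_dom (gen_dom U) (\<lambda>x. projQ z (gen U x))}"
    and G_gen: "\<And>x. x \<in> gen_dom G \<Longrightarrow>
                  gen G x = cl_op (gen_dom U) (\<lambda>x. projQ z (gen U x)) (projQ z x)"
begin

abbreviation "cc \<equiv> cinner z z"
abbreviation "zs \<equiv> adj (gen_dom U) (gen U) z"
abbreviation "Q \<equiv> projQ z"
abbreviation "QL \<equiv> (\<lambda>x. projQ z (gen U x))"

lemma cc_nz: "cc \<noteq> 0"
  using z0 by (simp add: cinner_self_eq_0)

lemma zs_prop:
  assumes "x \<in> U.D" shows "cinner (U.L x) z = cinner x zs"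
proof -
  obtain w0 where w0: "\<forall>x\<in>U.D. cinner (U.L x) z = cinner x w0"
    using zLd by (auto simp: adj_dom_def)
  have uniq: "w1 = w0" if w1: "\<forall>x\<in>U.D. cinner (U.L x) z = cinner x w1" for w1
  proof -
    have "cinner v (w1 - w0) = 0" for v
    proof -
      have "continuous_on (closure U.D) (\<lambda>v. cinner v (w1 - w0))"
        by (intro linear_continuous_on bounded_linear_cinner_left)
      moreover have "\<And>x. x \<in> U.D \<Longrightarrow> cinner x (w1 - w0) = 0" using w0 w1 by (simp add: cinner_diff_right)
      moreover have "v \<in> closure U.D" by (rule U.dense)
      ultimately show ?thesis by (rule continuous_constant_on_closure)
    qed
    then have "cinner (w1 - w0) (w1 - w0) = 0" by blast
    then show ?thesis by (simp add: cinner_self_eq_0)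
  qed
  have "(THE w. \<forall>x\<in>U.D. cinner (U.L x) z = cinner x w) = w0"
  proof (rule the_equality)
    show "\<forall>x\<in>U.D. cinner (U.L x) z = cinner x w0" by (rule w0)
    show "\<And>w. \<forall>x\<in>U.D. cinner (U.L x) z = cinner x w \<Longrightarrow> w = w0" by (rule uniq)
  qed
  then have "zs = w0" by (simp add: adj_def)
  then show ?thesis using w0 assms by simp
qed

lemma Q_eq: "Q x = x - cscale (cinner x z / cc) z"
  by (simp add: projQ_def projP_def)

lemma QZ: "cinner (Q x) z = 0"
  using cc_nz by (simp add: Q_eq cinner_diff_left cinner_cscale_left)

lemma QZid: "cinner y z = 0 \<Longrightarrow> Q y = y"
  by (simp add: Q_eq)

lemma inner_Q_right: "cinner y z = 0 \<Longrightarrow> cinner y (Q v) = cinner y v"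
  by (simp add: Q_eq cinner_diff_right cinner_cscale_right')

lemma QD: "x \<in> U.D \<Longrightarrow> Q x \<in> U.D \<and> U.L (Q x) = U.L x - cscale (cinner x z / cc) (U.L z)"
proof -
  assume x: "x \<in> U.D"
  have a: "cscale (cinner x z / cc) z \<in> U.D" and b: "U.L (cscale (cinner x z / cc) z) = cscale (cinner x z / cc) (U.L z)"
    using U.dom_cscale[OF zL] by auto
  show ?thesis using U.dom_diff[OF x a] b by (simp add: Q_eq)
qed

lemma QD_rev: "Q x \<in> U.D \<Longrightarrow> x \<in> U.D"
proof -
  assume q: "Q x \<in> U.D"
  have a: "cscale (cinner x z / cc) z \<in> U.D" using U.dom_cscale[OF zL] by auto
  have "Q x + cscale (cinner x z / cc) z \<in> U.D" using U.dom_add[OF q a] by blast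
  moreover have "Q x + cscale (cinner x z / cc) z = x" by (simp add: Q_eq)
  ultimately show ?thesis by simp
qed

lemma L_decomp: "x \<in> U.D \<Longrightarrow> U.L x = Q (U.L x) + cscale (cinner x zs / cc) z"
  using zs_prop[of x] by (simp only: Q_eq diff_add_cancel)

lemma graph_closed: "closed {(x, QL x) | x. x \<in> U.D}"
  unfolding closed_sequential_limits
proof (intro allI impI, elim conjE)
  fix p :: "nat \<Rightarrow> 'a \<times> 'a" and l
  assume p: "\<forall>n. p n \<in> {(x, QL x) | x. x \<in> U.D}" and pl: "p \<longlonglongrightarrow> l"
  define xs where "xs n = fst (p n)" for n
  have xsD: "xs n \<in> U.D" and psnd: "snd (p n) = QL (xs n)" for n
    using p[rule_format, of n] by (auto simp: xs_def)
  have c1: "xs \<longlonglongrightarrow> fst l" unfolding xs_def[abs_def] by (intro tendsto_fst pl)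
  have c2: "(\<lambda>n. QL (xs n)) \<longlonglongrightarrow> snd l" using tendsto_snd[OF pl] psnd by simp
  have c3: "(\<lambda>n. U.L (xs n)) \<longlonglongrightarrow> snd l + cscale (cinner (fst l) zs / cc) z"
  proof -
    have "(\<lambda>n. QL (xs n) + cscale (cinner (xs n) zs / cc) z) \<longlonglongrightarrow> snd l + cscale (cinner (fst l) zs / cc) z"
      by (intro tendsto_add c2 bounded_linear.tendsto[OF bounded_linear_cscale_left]
          tendsto_divide tendsto_const bounded_linear.tendsto[OF bounded_linear_cinner_left] c1 cc_nz)
    moreover have "U.L (xs n) = QL (xs n) + cscale (cinner (xs n) zs / cc) z" for n
      using L_decomp[OF xsD] .
    ultimately show ?thesis by simp
  qed
  have fD: "fst l \<in> U.D" and fL: "U.L (fst l) = snd l + cscale (cinner (fst l) zs / cc) z"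
    using U.closed_gen[OF xsD c1 c3] by auto
  have "QL (fst l) = snd l"
    using L_decomp[OF fD] fL by simp
  then show "l \<in> {(x, QL x) | x. x \<in> U.D}" using fD by (intro CollectI exI[of _ "fst l"]) auto
qed

lemma cl_graph_eq: "cl_graph U.D QL = {(x, QL x) | x. x \<in> U.D}"
  unfolding cl_graph_def by (rule closure_closed[OF graph_closed])

lemma cl_dom_eq: "cl_dom U.D QL = U.D"
  unfolding cl_dom_def cl_graph_eq by auto

lemma cl_op_eq: "x \<in> U.D \<Longrightarrow> cl_op U.D QL x = QL x"
  unfolding cl_op_def cl_graph_eq by (rule the_equality) auto

lemma G_dom_eq: "G.D = U.D"
  unfolding G_dom cl_dom_eq using QD QD_rev by blast

lemma G_gen_eq: "x \<in> U.D \<Longrightarrow> G.L x = QL (Q x)"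
  using G_gen G_dom_eq QD cl_op_eq by auto

lemma G_gen_Z: "x \<in> U.D \<Longrightarrow> cinner x z = 0 \<Longrightarrow> G.L x = U.L x - cscale (cinner x zs / cc) z"
  using G_gen_eq[of x] QZid[of x] zs_prop[of x] by (simp add: Q_eq)

lemma GZ: "cinner x z = 0 \<Longrightarrow> t \<ge> 0 \<Longrightarrow> cinner (G t x) z = 0"
proof -
  assume x: "cinner x z = 0" and t: "t \<ge> 0"
  have i: "integral {0..t} (\<lambda>s. G s x) \<in> U.D" and e: "G.L (integral {0..t} (\<lambda>s. G s x)) = G t x - x"
    using G.int_dom[OF t, of x] G_dom_eq by auto
  have "cinner (G t x - x) z = 0"
    unfolding e[symmetric] G_gen_eq[OF i] by (rule QZ)
  then show ?thesis using x by (simp add: cinner_diff_left)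
qed

end




context mz begin

definition jf :: "real \<Rightarrow> 'a \<Rightarrow> real \<Rightarrow> 'a" where
  "jf t x s = cscale (cinner (G s x) zs / cc) (U (t - s) z)"

lemma dyson_D:
  assumes xD: "x \<in> U.D" and xZ: "cinner x z = 0" and t: "t \<ge> 0"
  shows "U t x - G t x = integral {0..t} (jf t x)"
proof -
  obtain M where M: "M \<ge> 1" "\<forall>r. 0 \<le> r \<and> r \<le> t \<longrightarrow> (\<forall>y. norm (U r y) \<le> M * norm y)"
    using U.bound by blast
  have xG: "x \<in> G.D" using G_dom_eq xD by simp
  have der: "((\<lambda>r. U (t - r) (G r x)) has_vector_derivative (- jf t x s)) (at s within {0..t})"
    if s: "s \<in> {0..t}" for s
  proof -
    have s0: "s \<ge> 0" "s \<le> t" using s by auto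
    have yD: "G s x \<in> U.D" using G.gen_S[OF xG s0(1)] G_dom_eq by auto
    have yZ: "cinner (G s x) z = 0" using GZ xZ s0 by simp
    have gG: "G s (G.L x) = G.L (G s x)" using G.gen_S[OF xG s0(1)] by simp
    have dF: "((\<lambda>r. U (t - r) (G s x)) has_vector_derivative - U (t - s) (U.L (G s x))) (at s within {0..t})"
    proof -
      have "((\<lambda>r. t - r) has_real_derivative -1) (at s within {0..t})"
        by (auto intro!: derivative_eq_intros)
      then have d1: "((\<lambda>r. t - r) has_vector_derivative -1) (at s within {0..t})"
        by (simp add: has_real_derivative_iff_has_vector_derivative)
      have ts: "0 \<le> t - s" using s0 by simp
      have d2: "((\<lambda>\<sigma>. U \<sigma> (G s x)) has_vector_derivative U (t - s) (U.L (G s x))) (at (t - s) within (\<lambda>r. t - r) ` {0..t})"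
        using U.deriv[OF yD ts] by (rule has_vector_derivative_within_subset) auto
      show ?thesis using vector_diff_chain_within[OF d1 d2] by (simp add: o_def)
    qed
    have dg: "((\<lambda>r. G r x) has_vector_derivative G s (G.L x)) (at s within {0..t})"
      using G.deriv[OF xG s0(1)] by (rule has_vector_derivative_within_subset) auto
    have "((\<lambda>r. U (t - r) (G r x)) has_vector_derivative
            (U (t - s) (G s (G.L x)) + - U (t - s) (U.L (G s x)))) (at s within {0..t})"
    proof (rule op_prod_deriv[where M = M and F = "\<lambda>r. U (t - r)" and g = "\<lambda>r. G r x"])
      show "\<And>r. r \<in> {0..t} \<Longrightarrow> bounded_linear (U (t - r))" by (rule U.blin) auto
      show "0 \<le> M" using M by simp
      show "\<And>r y. r \<in> {0..t} \<Longrightarrow> norm (U (t - r) y) \<le> M * norm y" using M by auto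
      show "\<exists>d>0. \<forall>r\<in>{0..t}. \<bar>r - s\<bar> < d \<longrightarrow> norm (U (t - r) (G s (G.L x)) - U (t - s) (G s (G.L x))) < e"
        if e: "e > 0" for e
      proof -
        obtain d where d: "d > 0" "\<forall>\<sigma>. \<sigma> \<ge> 0 \<and> \<bar>\<sigma> - (t - s)\<bar> < d \<longrightarrow> norm (U \<sigma> (G s (G.L x)) - U (t - s) (G s (G.L x))) < e"
          using U.cont_eps[of "t - s" e "G s (G.L x)"] s0 e by auto
        show ?thesis
        proof (intro exI[of _ d] conjI ballI impI)
          fix r assume r: "r \<in> {0..t}" "\<bar>r - s\<bar> < d"
          have "\<bar>(t - r) - (t - s)\<bar> < d" using r by (simp add: abs_minus_commute)
          then show "norm (U (t - r) (G s (G.L x)) - U (t - s) (G s (G.L x))) < e" using d r by auto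
        qed (rule d(1))
      qed
      show "((\<lambda>r. U (t - r) (G s x)) has_vector_derivative - U (t - s) (U.L (G s x))) (at s within {0..t})"
        by (rule dF)
      show "((\<lambda>r. G r x) has_vector_derivative G s (G.L x)) (at s within {0..t})" by (rule dg)
      show "s \<in> {0..t}" by (rule s)
    qed
    moreover have "U (t - s) (G s (G.L x)) + - U (t - s) (U.L (G s x)) = - jf t x s"
    proof -
      have ts: "t - s \<ge> 0" using s0 by simp
      have "U (t - s) (G s (G.L x)) + - U (t - s) (U.L (G s x)) = U (t - s) (G.L (G s x) - U.L (G s x))"
        using ts gG by (simp add: U.Sdiff)
      also have "\<dots> = U (t - s) (- cscale (cinner (G s x) zs / cc) z)"
        using G_gen_Z[OF yD yZ] by simp
      also have "\<dots> = - jf t x s" using ts by (simp add: U.Sminus U.Scs jf_def)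
      finally show ?thesis .
    qed
    ultimately show ?thesis by simp
  qed
  have "((\<lambda>s. - jf t x s) has_integral (U (t - t) (G t x) - U (t - 0) (G 0 x))) {0..t}"
    by (rule fundamental_theorem_of_calculus[OF t der])
  then have "((\<lambda>s. - jf t x s) has_integral (G t x - U t x)) {0..t}" by simp
  then have "integral {0..t} (\<lambda>s. - jf t x s) = G t x - U t x" by (rule integral_unique)
  then have "- integral {0..t} (jf t x) = G t x - U t x" by simp
  then show ?thesis by (simp add: algebra_simps)
qed

lemma jf_cont: "continuous_on {0..t} (jf t x)"
proof -
  have c1: "continuous_on {0..t} (\<lambda>s. cinner (G s x) zs)"
    by (rule continuous_on_compose2[OF linear_continuous_on[OF bounded_linear_cinner_left] G.cont_on_sub]) auto
  have c2: "continuous_on {0..t} (\<lambda>s. U (t - s) z)"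
    by (rule continuous_on_compose2[OF U.cont_on]) (auto intro!: continuous_intros)
  show ?thesis unfolding jf_def
    by (intro bounded_bilinear.continuous_on[OF bounded_bilinear_cscale] continuous_intros c1 c2) (use cc_nz in auto)
qed

lemma jf_lip:
  assumes t: "t \<ge> 0"
  shows "\<exists>C. \<forall>x v. norm (integral {0..t} (jf t x) - integral {0..t} (jf t v)) \<le> C * norm (x - v)"
proof -
  obtain MU where MU: "MU \<ge> 1" "\<forall>r. 0 \<le> r \<and> r \<le> t \<longrightarrow> (\<forall>y. norm (U r y) \<le> MU * norm y)"
    using U.bound by blast
  obtain MG where MG: "MG \<ge> 1" "\<forall>r. 0 \<le> r \<and> r \<le> t \<longrightarrow> (\<forall>y. norm (G r y) \<le> MG * norm y)"
    using G.bound by blast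
  define C where "C = MG * norm zs / cmod cc * (MU * norm z) * t"
  show ?thesis
  proof (intro exI[of _ C] allI)
    fix x v
    have "integral {0..t} (jf t x) - integral {0..t} (jf t v) = integral {0..t} (\<lambda>s. jf t x s - jf t v s)"
      by (rule integral_diff[symmetric]) (auto intro: integrable_continuous_real jf_cont)
    also have "\<dots> = integral {0..t} (\<lambda>s. cscale (cinner (G s (x - v)) zs / cc) (U (t - s) z))"
      by (rule integral_cong) (simp add: jf_def G.Sdiff cinner_diff_left cscale_diff_left diff_divide_distrib)
    finally have eq: "integral {0..t} (jf t x) - integral {0..t} (jf t v)
        = integral {0..t} (\<lambda>s. cscale (cinner (G s (x - v)) zs / cc) (U (t - s) z))" .
    have "norm (integral {0..t} (\<lambda>s. cscale (cinner (G s (x - v)) zs / cc) (U (t - s) z)))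
        \<le> (MG * norm (x - v) * norm zs / cmod cc * (MU * norm z)) * (t - 0)"
    proof (rule integral_bound)
      show "0 \<le> t" by (rule t)
      have "continuous_on {0..t} (jf t (x - v))" by (rule jf_cont)
      then show "continuous_on {0..t} (\<lambda>s. cscale (cinner (G s (x - v)) zs / cc) (U (t - s) z))"
        by (simp add: jf_def)
      fix s assume s: "s \<in> {0..t}"
      have a: "cmod (cinner (G s (x - v)) zs / cc) \<le> MG * norm (x - v) * norm zs / cmod cc"
      proof -
        have "cmod (cinner (G s (x - v)) zs) \<le> norm (G s (x - v)) * norm zs" by (rule cauchy_schwarz)
        also have "\<dots> \<le> MG * norm (x - v) * norm zs" using MG s by (intro mult_right_mono) auto
        finally show ?thesis by (simp add: norm_divide divide_right_mono)
      qed
      have b: "norm (U (t - s) z) \<le> MU * norm z" using MU s by auto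
      show "norm (cscale (cinner (G s (x - v)) zs / cc) (U (t - s) z))
          \<le> MG * norm (x - v) * norm zs / cmod cc * (MU * norm z)"
      proof -
        have "0 \<le> MG * norm (x - v) * norm zs / cmod cc" using MG(1) by simp
        then show ?thesis unfolding norm_cscale using a b by (intro mult_mono) auto
      qed
    qed
    then show "norm (integral {0..t} (jf t x) - integral {0..t} (jf t v)) \<le> C * norm (x - v)"
      unfolding eq C_def by (simp add: mult_ac)
  qed
qed

lemma dyson:
  assumes xZ: "cinner x z = 0" and t: "t \<ge> 0"
  shows "U t x - G t x = integral {0..t} (jf t x)"
proof -
  obtain xs where xs: "\<And>n. xs n \<in> U.D" "xs \<longlonglongrightarrow> x"
    using closure_sequential[of x U.D] U.dense by blast
  define ys where "ys n = Q (xs n)" for n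
  have ysD: "ys n \<in> U.D" and ysZ: "cinner (ys n) z = 0" for n
    using QD[OF xs(1)] QZ by (auto simp: ys_def)
  have ysc: "ys \<longlonglongrightarrow> x"
  proof -
    have "(\<lambda>n. xs n - cscale (cinner (xs n) z / cc) z) \<longlonglongrightarrow> x - cscale (cinner x z / cc) z"
      by (intro tendsto_diff xs bounded_linear.tendsto[OF bounded_linear_cscale_left]
          tendsto_divide tendsto_const bounded_linear.tendsto[OF bounded_linear_cinner_left] cc_nz)
    then show ?thesis using xZ unfolding ys_def[abs_def] Q_eq by simp
  qed
  obtain C where C: "\<forall>x v. norm (integral {0..t} (jf t x) - integral {0..t} (jf t v)) \<le> C * norm (x - v)"
    using jf_lip[OF t] by blast
  have jc: "(\<lambda>n. integral {0..t} (jf t (ys n))) \<longlonglongrightarrow> integral {0..t} (jf t x)"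
  proof (rule LIM_zero_cancel, rule Lim_null_comparison)
    show "eventually (\<lambda>n. norm (integral {0..t} (jf t (ys n)) - integral {0..t} (jf t x)) \<le> C * norm (ys n - x)) sequentially"
      using C by simp
    show "(\<lambda>n. C * norm (ys n - x)) \<longlonglongrightarrow> 0"
      by (intro tendsto_mult_right_zero tendsto_norm_zero LIM_zero ysc)
  qed
  have "(\<lambda>n. U t (ys n) - G t (ys n) - integral {0..t} (jf t (ys n))) \<longlonglongrightarrow> U t x - G t x - integral {0..t} (jf t x)"
    by (intro tendsto_diff jc bounded_linear.tendsto[OF U.blin[OF t]] bounded_linear.tendsto[OF G.blin[OF t]] ysc)
  moreover have "U t (ys n) - G t (ys n) - integral {0..t} (jf t (ys n)) = 0" for n
    using dyson_D[OF ysD ysZ t] by simp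
  ultimately have "U t x - G t x - integral {0..t} (jf t x) = 0"
    using LIMSEQ_unique tendsto_const by fastforce
  then show ?thesis by simp
qed

end




theorem corollary4:
  fixes U G :: "real \<Rightarrow> 'a::chilbert \<Rightarrow> 'a"
    and z :: 'a
    and K :: "real \<Rightarrow> complex"
    and \<eta> :: "real \<Rightarrow> 'a"
  assumes U: "c0_semigroup U"
    and zL: "z \<in> gen_dom U"
    and zLd: "z \<in> adj_dom (gen_dom U) (gen U)"
    and z0: "z \<noteq> 0"
    and K_cont: "continuous_on {0..} K"
    and K_eq: "\<And>t. t \<ge> 0 \<Longrightarrow>
        K t = cinner (U t (projQ z (gen U z))) (projQ z (adj (gen_dom U) (gen U) z)) / cinner z z
            - integral {0..t} (\<lambda>s. K (t - s) *
                 (cinner (U s z) (projQ z (adj (gen_dom U) (gen U) z)) / cinner z z))"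
    and eta_def: "\<And>t. \<eta> t = U t (projQ z (gen U z))
                           - integral {0..t} (\<lambda>s. cscale (K (t - s)) (U s z))"
    and G: "c0_semigroup G"
    and G_dom: "gen_dom G = {x. projQ z x \<in> cl_dom (gen_dom U) (\<lambda>x. projQ z (gen U x))}"
    and G_gen: "\<And>x. x \<in> gen_dom G \<Longrightarrow>
                  gen G x = cl_op (gen_dom U) (\<lambda>x. projQ z (gen U x)) (projQ z x)"
  shows "\<forall>t\<ge>0. \<eta> t = G t (projQ z (gen U z))
           \<and> integral {0..t} \<eta> \<in> {x. projQ z x \<in> cl_dom (gen_dom U) (\<lambda>x. projQ z (gen U x))}
           \<and> \<eta> t = \<eta> 0 + cl_op (gen_dom U) (\<lambda>x. projQ z (gen U x)) (projQ z (integral {0..t} \<eta>))"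
proof -
  have "mz U G z"
    unfolding mz_def mz_axioms_def c0sg_def using U G zL zLd z0 G_dom G_gen by blast
  then interpret mz U G z .
  define w where "w = projQ z (gen U z)"
  define Qzs where "Qzs = projQ z (adj (gen_dom U) (gen U) z)"
  define f where "f s = cinner (U s z) Qzs / cc" for s
  define k where "k s = cinner (G s w) zs / cc" for s
  have wZ: "cinner w z = 0" by (simp add: w_def QZ)
  have phi: "bounded_linear (\<lambda>x. cinner x Qzs / cc)"
    by (intro bounded_linear_compose[OF bounded_linear_divide bounded_linear_cinner_left])
  have fcont: "continuous_on {0..} f"
    unfolding f_def
    by (intro continuous_intros continuous_on_compose2[OF linear_continuous_on[OF bounded_linear_cinner_left] U.cont_on])
       (use cc_nz in auto)
  have kcont: "continuous_on {0..} k"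
    unfolding k_def
    by (intro continuous_intros continuous_on_compose2[OF linear_continuous_on[OF bounded_linear_cinner_left] G.cont_on])
       (use cc_nz in auto)
  have cont_refl: "continuous_on {0..t} (\<lambda>s. h (t - s))" if h: "continuous_on {0..} h" for h :: "real \<Rightarrow> complex" and t
    by (rule continuous_on_compose2[OF h]) (auto intro!: continuous_intros)
  have keq: "k t = cinner (U t w) Qzs / cc - integral {0..t} (\<lambda>s. k (t - s) * f s)" if t: "t \<ge> 0" for t
  proof -
    have dy: "U t w - G t w = integral {0..t} (jf t w)" by (rule dyson[OF wZ t])
    have int: "jf t w integrable_on {0..t}" by (rule integrable_continuous_real[OF jf_cont])
    have "cinner (U t w) Qzs / cc - cinner (G t w) Qzs / cc = cinner (integral {0..t} (jf t w)) Qzs / cc"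
      unfolding dy[symmetric] by (simp add: cinner_diff_left diff_divide_distrib)
    also have "\<dots> = integral {0..t} ((\<lambda>x. cinner x Qzs / cc) \<circ> jf t w)"
      by (rule integral_linear[OF int phi, symmetric])
    also have "\<dots> = integral {0..t} (\<lambda>s. (\<lambda>s. k (t - s) * f s) (t - s))"
      by (rule integral_cong) (simp add: jf_def k_def f_def cinner_cscale_left)
    also have "\<dots> = integral {0..t} (\<lambda>s. k (t - s) * f s)" by (rule integral_reflect_shift)
    finally have a: "cinner (U t w) Qzs / cc - cinner (G t w) Qzs / cc = integral {0..t} (\<lambda>s. k (t - s) * f s)" .
    have "cinner (G t w) Qzs = cinner (G t w) zs"
      unfolding Qzs_def by (rule inner_Q_right[OF GZ[OF wZ t]])
    then have "cinner (G t w) Qzs / cc = k t" by (simp add: k_def)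
    with a show ?thesis by (simp add: algebra_simps)
  qed
  have Kk: "K t = k t" if t: "t \<ge> 0" for t
  proof -
    have "(\<lambda>s. K s - k s) t = 0"
    proof (rule volterra_unique[where T = t and f = f])
      show "0 \<le> t" by (rule t)
      show "continuous_on {0..t} (\<lambda>s. K s - k s)"
        by (intro continuous_intros continuous_on_subset[OF K_cont] continuous_on_subset[OF kcont]) auto
      show "continuous_on {0..t} f" by (rule continuous_on_subset[OF fcont]) auto
      show "t \<in> {0..t}" using t by simp
      fix r assume r: "r \<in> {0..t}"
      have i1: "(\<lambda>s. K (r - s) * f s) integrable_on {0..r}"
        using r by (intro integrable_continuous_real continuous_intros cont_refl K_cont
            continuous_on_subset[OF fcont]) auto
      have i2: "(\<lambda>s. k (r - s) * f s) integrable_on {0..r}"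
        using r by (intro integrable_continuous_real continuous_intros cont_refl kcont
            continuous_on_subset[OF fcont]) auto
      have "K r - k r = integral {0..r} (\<lambda>s. k (r - s) * f s) - integral {0..r} (\<lambda>s. K (r - s) * f s)"
        using K_eq[of r] keq[of r] r by (simp add: w_def Qzs_def f_def)
      also have "\<dots> = - integral {0..r} (\<lambda>s. (\<lambda>s. K s - k s) (r - s) * f s)"
        using integral_diff[OF i1 i2] by (simp add: algebra_simps)
      finally show "(\<lambda>s. K s - k s) r = - integral {0..r} (\<lambda>s. (\<lambda>s. K s - k s) (r - s) * f s)" by simp
    qed
    then show ?thesis by simp
  qed
  have c1: "\<eta> t = G t w" if t: "t \<ge> 0" for t
  proof -
    have "integral {0..t} (\<lambda>s. cscale (K (t - s)) (U s z)) = integral {0..t} (\<lambda>s. cscale (k (t - s)) (U s z))"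
      by (rule integral_cong) (simp add: Kk)
    also have "\<dots> = integral {0..t} (\<lambda>s. (\<lambda>s. cscale (k (t - s)) (U s z)) (t - s))"
      by (rule integral_reflect_shift[symmetric])
    also have "\<dots> = integral {0..t} (jf t w)"
      by (rule integral_cong) (simp add: jf_def k_def)
    also have "\<dots> = U t w - G t w" by (rule dyson[OF wZ t, symmetric])
    finally show ?thesis by (simp add: eta_def w_def)
  qed
  have eta0: "\<eta> 0 = w" by (simp add: eta_def w_def)
  show ?thesis
  proof (intro allI impI conjI)
    fix t :: real assume t: "t \<ge> 0"
    show "\<eta> t = G t (projQ z (gen U z))" using c1[OF t] by (simp add: w_def)
    have ie: "integral {0..t} \<eta> = integral {0..t} (\<lambda>s. G s w)"
      by (rule integral_cong) (simp add: c1)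
    have gd: "integral {0..t} (\<lambda>s. G s w) \<in> G.D" and gl: "G.L (integral {0..t} (\<lambda>s. G s w)) = G t w - w"
      using G.int_dom[OF t, of w] by auto
    show "integral {0..t} \<eta> \<in> {x. projQ z x \<in> cl_dom (gen_dom U) (\<lambda>x. projQ z (gen U x))}"
      using gd ie G_dom by simp
    have "cl_op (gen_dom U) (\<lambda>x. projQ z (gen U x)) (projQ z (integral {0..t} \<eta>)) = G t w - w"
      using G_gen[OF gd] gl ie by simp
    then show "\<eta> t = \<eta> 0 + cl_op (gen_dom U) (\<lambda>x. projQ z (gen U x)) (projQ z (integral {0..t} \<eta>))"
      using c1[OF t] eta0 by simp
  qed
qed



end
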